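(* Let $G$ be a group generated by a finite conjugacy class $X$, let $m$ be the order of the conjugation action of any $x\in X$ on $X$, let $<$ be a total order on $X$, and let $z$ be the maximal element of $(X,<)$. Then for all $n\ge 0$, every element of $X^n=\{y_1y_2\cdots y_n: y_i\in X\}\subseteq G$ can be written as $x_1^{n_1}x_2^{n_2}\cdots x_k^{n_k}z^l$ with $k,l\ge0$, $n_1+\cdots+n_k+l=n$, $x_1<x_2<\cdots<x_k<z$ in $X$, and $1\le n_i\le m-1$ for all $1\le i\le k$.
   Context: The conjugation action of $x\in X$ on $X$ is the permutation $y\mapsto xyx^{-1}$ of $X$; its order $m$ is the same for all $x\in X$ since $X$ is a conjugacy class. *)

theory Defs
  imports "HOL-Algebra.Algebra"
begin

definition mprod :: "('a, 'b) monoid_scheme \<Rightarrow> 'a list \<Rightarrow> 'a" where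
  "mprod G ys = foldr (\<lambda>a b. a \<otimes>\<^bsub>G\<^esub> b) ys \<one>\<^bsub>G\<^esub>"

definition is_conj_class :: "('a, 'b) monoid_scheme \<Rightarrow> 'a set \<Rightarrow> bool" where
  "is_conj_class G C \<longleftrightarrow> (\<exists>g\<in>carrier G.
      C = {h \<otimes>\<^bsub>G\<^esub> g \<otimes>\<^bsub>G\<^esub> m_inv G h | h. h \<in> carrier G})"

definition conj_action_order :: "('a, 'b) monoid_scheme \<Rightarrow> 'a set \<Rightarrow> 'a \<Rightarrow> nat" where
  "conj_action_order G C x = (LEAST m. 0 < m \<and>
      (\<forall>y\<in>C. ((\<lambda>y. x \<otimes>\<^bsub>G\<^esub> y \<otimes>\<^bsub>G\<^esub> m_inv G x) ^^ m) y = y))"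

end

theory Submission imports Defs begin

context group begin

lemma mprod_Cons[simp]: "mprod G (a # L) = a \<otimes> mprod G L"
  by (simp add: mprod_def)
lemma mprod_Nil[simp]: "mprod G [] = \<one>" by (simp add: mprod_def)

lemma mprod_closed[simp]: "set L \<subseteq> carrier G \<Longrightarrow> mprod G L \<in> carrier G"
  by (induction L) auto

lemma mprod_append: "set L1 \<subseteq> carrier G \<Longrightarrow> set L2 \<subseteq> carrier G \<Longrightarrow>
   mprod G (L1 @ L2) = mprod G L1 \<otimes> mprod G L2"
  by (induction L1) (auto simp: m_assoc)

lemma inv_cancel_l: "x \<in> carrier G \<Longrightarrow> y \<in> carrier G \<Longrightarrow> inv x \<otimes> (x \<otimes> y) = y"
  by (simp add: m_assoc[symmetric])
lemma inv_cancel_l2: "x \<in> carrier G \<Longrightarrow> y \<in> carrier G \<Longrightarrow> x \<otimes> (inv x \<otimes> y) = y"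
  by (simp add: m_assoc[symmetric])

lemma conj_pow: "k \<in> carrier G \<Longrightarrow> a \<in> carrier G \<Longrightarrow>
   (k \<otimes> a \<otimes> inv k) [^] (n::nat) = k \<otimes> a [^] n \<otimes> inv k"
proof (induction n)
  case 0 then show ?case by simp
next
  case (Suc n)
  then show ?case by (simp add: m_assoc inv_cancel_l)
qed

lemma iter_conj: "x \<in> carrier G \<Longrightarrow> y \<in> carrier G \<Longrightarrow>
  ((\<lambda>y. x \<otimes> y \<otimes> inv x) ^^ k) y = x [^] k \<otimes> y \<otimes> inv (x [^] k)"
proof (induction k)
  case 0 then show ?case by simp
next
  case (Suc k)
  have e: "x [^] Suc k = x \<otimes> x [^] k" using Suc.prems(1) nat_pow_Suc2 by blast
  have "((\<lambda>y. x \<otimes> y \<otimes> inv x) ^^ Suc k) y = x \<otimes> (x [^] k \<otimes> y \<otimes> inv (x [^] k)) \<otimes> inv x"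
    using Suc by simp
  also have "\<dots> = (x \<otimes> x [^] k) \<otimes> y \<otimes> inv (x \<otimes> x [^] k)"
    using Suc by (simp add: inv_mult_group m_assoc)
  finally show ?case by (simp only: e)
qed

lemma central_push:
  assumes c: "c \<in> carrier G" "\<forall>g\<in>carrier G. c \<otimes> g = g \<otimes> c"
  and zc: "w \<in> carrier G"
  shows "set L \<subseteq> carrier G \<Longrightarrow> c \<otimes> mprod G (L @ [w]) = mprod G (L @ [c \<otimes> w])"
proof (induction L)
  case Nil then show ?case using c zc by simp
next
  case (Cons a L)
  have "c \<otimes> mprod G ((a # L) @ [w]) = (c \<otimes> a) \<otimes> mprod G (L @ [w])"
    using Cons c zc by (simp add: m_assoc)
  also have "\<dots> = a \<otimes> (c \<otimes> mprod G (L @ [w]))"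
    using Cons c zc by (simp add: m_assoc)
  finally show ?case using Cons by simp
qed

lemma centralizer_gen:
  assumes c: "c \<in> carrier G" and H: "H \<subseteq> carrier G" and comm: "\<forall>h\<in>H. c \<otimes> h = h \<otimes> c"
  shows "g \<in> generate G H \<Longrightarrow> c \<otimes> g = g \<otimes> c"
proof (induction g rule: generate.induct)
  case one then show ?case using c by simp
next
  case (incl h) then show ?case using comm by simp
next
  case (inv h)
  then have h: "h \<in> carrier G" and e: "c \<otimes> h = h \<otimes> c" using H comm by auto
  have "inv h \<otimes> (c \<otimes> h) \<otimes> inv h = inv h \<otimes> (h \<otimes> c) \<otimes> inv h" using e by simp
  then show ?case using h c by (simp add: m_assoc inv_cancel_l)
next
  case (eng h1 h2)
  have "h1 \<in> carrier G" "h2 \<in> carrier G" using eng.hyps H generate_in_carrier by auto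
  then show ?case using eng c by (metis m_assoc)
qed


lemma conj_inj: "a \<in> carrier G \<Longrightarrow> u \<in> carrier G \<Longrightarrow> v \<in> carrier G \<Longrightarrow>
   a \<otimes> u \<otimes> inv a = a \<otimes> v \<otimes> inv a \<Longrightarrow> u = v"
proof -
  assume c: "a \<in> carrier G" "u \<in> carrier G" "v \<in> carrier G" and e: "a \<otimes> u \<otimes> inv a = a \<otimes> v \<otimes> inv a"
  have "u = inv a \<otimes> (a \<otimes> u \<otimes> inv a) \<otimes> a" using c by (simp add: m_assoc inv_cancel_l)
  also have "\<dots> = inv a \<otimes> (a \<otimes> v \<otimes> inv a) \<otimes> a" using e by simp
  also have "\<dots> = v" using c by (simp add: m_assoc inv_cancel_l)
  finally show ?thesis .
qed

lemma conj_fix_comm: "c \<in> carrier G \<Longrightarrow> y \<in> carrier G \<Longrightarrow> c \<otimes> y \<otimes> inv c = y \<Longrightarrow> c \<otimes> y = y \<otimes> c"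
proof -
  assume c: "c \<in> carrier G" "y \<in> carrier G" and e: "c \<otimes> y \<otimes> inv c = y"
  have "c \<otimes> y = (c \<otimes> y \<otimes> inv c) \<otimes> c" using c by (simp add: m_assoc)
  then show ?thesis using e by simp
qed

end

lemma sort_word:
  fixes G (structure)
  assumes gr: "group G" and CG: "C \<subseteq> carrier G" and fin: "finite C"
    and lin: "linear_order_on C R"
    and cl: "\<forall>a b. a \<in> C \<longrightarrow> b \<in> C \<longrightarrow> inv\<^bsub>G\<^esub> b \<otimes>\<^bsub>G\<^esub> a \<otimes>\<^bsub>G\<^esub> b \<in> C"
  shows "set ys \<subseteq> C \<Longrightarrow> \<exists>ys'. set ys' \<subseteq> C \<and> length ys' = length ys
           \<and> sorted_wrt (\<lambda>a b. (a, b) \<in> R) ys' \<and> mprod G ys' = mprod G ys"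
proof -
  interpret group G by (rule gr)
  have RC: "R \<subseteq> C \<times> C" and tr: "trans R" and an: "antisym R" and tot: "total_on C R"
    and rf: "refl_on C R"
    using lin by (auto simp: linear_order_on_def partial_order_on_def preorder_on_def)
  define S where "S = R - Id"
  have finS: "finite S" using RC fin unfolding S_def
    by (meson Diff_subset finite_SigmaI finite_subset)
  have trS: "trans S" using tr an unfolding S_def trans_def antisym_def by blast
  have "acyclic S" unfolding acyclic_def using trS by (simp add: S_def)
  then have wfS: "wf (lex S)" using finS finite_acyclic_wf by blast
  have trp: "transp (\<lambda>a b. (a, b) \<in> R)" using tr by (simp add: trans_def transp_def)
  show "set ys \<subseteq> C \<Longrightarrow> ?thesis"
  proof (induction ys rule: wf_induct[OF wfS])
    case (1 ys)
    show ?case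
    proof (cases "sorted_wrt (\<lambda>a b. (a, b) \<in> R) ys")
      case True then show ?thesis using "1.prems" by blast
    next
      case False
      then obtain i where i: "Suc i < length ys" "(ys!i, ys!Suc i) \<notin> R"
        using sorted_wrt_iff_nth_Suc_transp[OF trp] by blast
      have dec: "ys = take i ys @ ys!i # ys!(Suc i) # drop (Suc (Suc i)) ys"
        using i(1) by (metis Cons_nth_drop_Suc Suc_lessD append_take_drop_id)
      define xs a b zs where "xs = take i ys" "a = ys!i" "b = ys!Suc i" "zs = drop (Suc (Suc i)) ys"
      have ys: "ys = xs @ a # b # zs" and ab: "(a,b) \<notin> R" using dec i unfolding xs_a_b_zs_def by auto
      have aC: "a \<in> C" and bC: "b \<in> C" and xsC: "set xs \<subseteq> C" and zsC: "set zs \<subseteq> C"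
        using "1.prems" ys by auto
      have "a \<noteq> b" using ab rf aC by (auto simp: refl_on_def)
      then have ba: "(b, a) \<in> S" using ab tot aC bC by (auto simp: total_on_def S_def)
      define a' where "a' = inv b \<otimes> a \<otimes> b"
      have a'C: "a' \<in> C" using cl aC bC a'_def by blast
      define ys2 where "ys2 = xs @ b # a' # zs"
      have "(ys2, ys) \<in> lex S" unfolding lex_conv ys2_def ys using ba by auto
      then obtain ys' where ys': "set ys' \<subseteq> C" "length ys' = length ys2"
          "sorted_wrt (\<lambda>a b. (a, b) \<in> R) ys'" "mprod G ys' = mprod G ys2"
        using "1.IH" xsC zsC bC a'C unfolding ys2_def by force
      have carr: "a \<in> carrier G" "b \<in> carrier G" "set xs \<subseteq> carrier G" "set zs \<subseteq> carrier G"
        using aC bC xsC zsC CG by auto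
      have "mprod G ys2 = mprod G ys"
        unfolding ys2_def ys a'_def using carr
        by (simp add: mprod_append m_assoc inv_cancel_l2)
      then show ?thesis using ys' by (auto simp: ys2_def ys)
    qed
  qed
qed


theorem mainTheorem2:
  fixes G (structure)
    and C :: "'a set" and R :: "'a rel" and z x0 :: 'a and m n :: nat
  assumes "group G"
    and "C \<subseteq> carrier G" and "finite C" and "is_conj_class G C"
    and "generate G C = carrier G"
    and "x0 \<in> C" and "m = conj_action_order G C x0"
    and "linear_order_on C R"
    and "z \<in> C" and "\<forall>x\<in>C. (x, z) \<in> R"
    and "set ys \<subseteq> C" and "length ys = n"
  shows "\<exists>xs ns l. length ns = length xs \<and> set xs \<subseteq> C
      \<and> sorted_wrt (\<lambda>a b. (a, b) \<in> R \<and> a \<noteq> b) xs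
      \<and> (\<forall>x\<in>set xs. (x, z) \<in> R \<and> x \<noteq> z)
      \<and> (\<forall>k\<in>set ns. 1 \<le> k \<and> k \<le> m - 1)
      \<and> sum_list ns + l = n
      \<and> mprod G ys = mprod G (map2 (\<lambda>x k. x [^] k) xs ns @ [z [^] l])"
proof -
  interpret group G by (rule assms(1))
  have CG: "C \<subseteq> carrier G" by (rule assms(2))
  have RC: "R \<subseteq> C \<times> C" and tr: "trans R" and an: "antisym R" and tot: "total_on C R"
    and rf: "refl_on C R"
    using assms(8) by (auto simp: linear_order_on_def partial_order_on_def preorder_on_def)
  obtain g where g: "g \<in> carrier G" and Ceq: "C = {h \<otimes> g \<otimes> inv h | h. h \<in> carrier G}"
    using assms(4) unfolding is_conj_class_def by blast
  have conjC: "k \<otimes> a \<otimes> inv k \<in> C" if a: "a \<in> C" and k: "k \<in> carrier G" for a k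
  proof -
    obtain h where h: "h \<in> carrier G" "a = h \<otimes> g \<otimes> inv h" using a Ceq by blast
    have "k \<otimes> a \<otimes> inv k = (k \<otimes> h) \<otimes> g \<otimes> inv (k \<otimes> h)"
      using h k g by (simp add: m_assoc inv_mult_group)
    then show ?thesis using Ceq h k by blast
  qed
  have conj_rel: "\<exists>k\<in>carrier G. b = k \<otimes> a \<otimes> inv k" if a: "a \<in> C" and b: "b \<in> C" for a b
  proof -
    obtain h1 where h1: "h1 \<in> carrier G" "a = h1 \<otimes> g \<otimes> inv h1" using a Ceq by blast
    obtain h2 where h2: "h2 \<in> carrier G" "b = h2 \<otimes> g \<otimes> inv h2" using b Ceq by blast
    have "(h2 \<otimes> inv h1) \<otimes> a \<otimes> inv (h2 \<otimes> inv h1) = b"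
      using h1 h2 g by (simp add: m_assoc inv_mult_group inv_cancel_l)
    then show ?thesis using h1 h2 by (metis inv_closed m_closed)
  qed
  have x0C: "x0 \<in> carrier G" using assms(6) CG by auto
  define F where "F = (\<lambda>k::nat. restrict (\<lambda>y. x0 [^] k \<otimes> y \<otimes> inv (x0 [^] k)) C)"
  have FS: "F ` UNIV \<subseteq> C \<rightarrow>\<^sub>E C" unfolding F_def using conjC x0C by auto
  have fPi: "finite (C \<rightarrow>\<^sub>E C)" using assms(3) by (simp add: finite_PiE)
  have "finite (F ` UNIV)" by (rule finite_subset[OF FS fPi])
  then have "\<not> inj F" by (metis finite_imageD infinite_UNIV_nat)
  then obtain i j where ij: "i \<noteq> j" "F i = F j" unfolding inj_def by blast
  then obtain i j where ij: "i < j" "F i = F j"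
    by (metis linorder_neqE_nat)
  define d where "d = j - i"
  have d0: "0 < d" using ij d_def by simp
  have dfix: "\<forall>y\<in>C. ((\<lambda>y. x0 \<otimes> y \<otimes> inv x0) ^^ d) y = y"
  proof
    fix y assume y: "y \<in> C"
    then have yc: "y \<in> carrier G" using CG by auto
    have e1: "x0 [^] i \<otimes> y \<otimes> inv (x0 [^] i) = x0 [^] j \<otimes> y \<otimes> inv (x0 [^] j)"
      using fun_cong[OF ij(2), of y] y unfolding F_def by simp
    have pj: "x0 [^] j = x0 [^] i \<otimes> x0 [^] d" using ij(1) x0C d_def by (simp add: nat_pow_mult)
    have e2: "x0 [^] j \<otimes> y \<otimes> inv (x0 [^] j) =
        x0 [^] i \<otimes> (x0 [^] d \<otimes> y \<otimes> inv (x0 [^] d)) \<otimes> inv (x0 [^] i)"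
      unfolding pj using x0C yc by (simp add: m_assoc inv_mult_group)
    have "x0 [^] i \<otimes> y \<otimes> inv (x0 [^] i) =
        x0 [^] i \<otimes> (x0 [^] d \<otimes> y \<otimes> inv (x0 [^] d)) \<otimes> inv (x0 [^] i)" using e1 e2 by (rule trans)
    then have "y = x0 [^] d \<otimes> y \<otimes> inv (x0 [^] d)"
      by (rule conj_inj[rotated 3]) (use x0C yc in simp_all)
    then show "((\<lambda>y. x0 \<otimes> y \<otimes> inv x0) ^^ d) y = y" using iter_conj x0C yc by simp
  qed
  have mprop: "0 < m \<and> (\<forall>y\<in>C. ((\<lambda>y. x0 \<otimes> y \<otimes> inv x0) ^^ m) y = y)"
    unfolding assms(7) conj_action_order_def
    by (rule LeastI[of _ d]) (use d0 dfix in auto)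
  define c where "c = x0 [^] m"
  have cC: "c \<in> carrier G" using x0C c_def by simp
  have "\<forall>y\<in>C. c \<otimes> y = y \<otimes> c"
  proof
    fix y assume y: "y \<in> C"
    then have yc: "y \<in> carrier G" using CG by auto
    have "c \<otimes> y \<otimes> inv c = y" using mprop y iter_conj[OF x0C yc, of m] c_def by simp
    then show "c \<otimes> y = y \<otimes> c" using conj_fix_comm cC yc by blast
  qed
  then have central: "\<forall>h\<in>carrier G. c \<otimes> h = h \<otimes> c"
    using centralizer_gen[OF cC CG] assms(5) by blast
  have powc: "x [^] m = c" if x: "x \<in> C" for x
  proof -
    obtain k where k: "k \<in> carrier G" "x = k \<otimes> x0 \<otimes> inv k" using conj_rel[OF assms(6) x] by blast
    have "x [^] m = k \<otimes> c \<otimes> inv k" using k x0C conj_pow c_def by simp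
    also have "\<dots> = c \<otimes> k \<otimes> inv k" using central k by simp
    also have "\<dots> = c" using cC k by (simp add: m_assoc)
    finally show ?thesis .
  qed
  have zc: "z \<in> carrier G" using assms(9) CG by auto
  have czm: "c = z [^] m" using powc assms(9) by simp
  have m2: "2 \<le> m" if a: "a \<in> C" "a \<noteq> z" for a
  proof (rule ccontr)
    assume "\<not> 2 \<le> m"
    then have "m = 1" using mprop by simp
    then have "a = z" using powc[OF a(1)] powc[OF assms(9)] subsetD[OF CG a(1)] zc a by simp
    then show False using a by simp
  qed
  have key: "set ws \<subseteq> C \<Longrightarrow> sorted_wrt (\<lambda>a b. (a,b)\<in>R) ws \<Longrightarrow>
     \<exists>xs ns l. length ns = length xs \<and> set xs \<subseteq> set ws
      \<and> sorted_wrt (\<lambda>a b. (a, b) \<in> R \<and> a \<noteq> b) xs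
      \<and> (\<forall>x\<in>set xs. (x, z) \<in> R \<and> x \<noteq> z)
      \<and> (\<forall>k\<in>set ns. 1 \<le> k \<and> k \<le> m - 1)
      \<and> sum_list ns + l = length ws
      \<and> mprod G ws = mprod G (map2 (\<lambda>x k. x [^] k) xs ns @ [z [^] l])" for ws
  proof (induction ws)
    case Nil
    then show ?case by (intro exI[of _ "[]"] exI[of _ 0]) simp
  next
    case (Cons a ws)
    then obtain xs ns l where IH: "length ns = length xs" "set xs \<subseteq> set ws"
      "sorted_wrt (\<lambda>a b. (a, b) \<in> R \<and> a \<noteq> b) xs"
      "\<forall>x\<in>set xs. (x, z) \<in> R \<and> x \<noteq> z" "\<forall>k\<in>set ns. 1 \<le> k \<and> k \<le> m - 1"
      "sum_list ns + l = length ws"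
      "mprod G ws = mprod G (map2 (\<lambda>x k. x [^] k) xs ns @ [z [^] l])" by auto
    have aC: "a \<in> C" and wsC: "set ws \<subseteq> C" using Cons.prems by auto
    have ac: "a \<in> carrier G" using aC CG by auto
    have ge: "\<forall>y\<in>set ws. (a, y) \<in> R" using Cons.prems by simp
    have xsC: "set xs \<subseteq> C" using IH(2) wsC by auto
    have Lc: "set (map2 (\<lambda>x k. x [^] k) xs' ns') \<subseteq> carrier G" if "set xs' \<subseteq> C" for xs' and ns' :: "nat list"
      using that CG by (auto dest!: set_zip_leftD)
    show ?case
    proof (cases "a = z")
      case True
      have "xs = []"
      proof (rule ccontr)
        assume "xs \<noteq> []"
        then obtain x where x: "x \<in> set xs" by (cases xs) auto
        then have "(z, x) \<in> R" "(x, z) \<in> R" "x \<noteq> z" using ge IH(2,4) True by auto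
        then show False using an by (auto simp: antisym_def)
      qed
      then have "ns = []" using IH(1) by simp
      then show ?thesis using IH \<open>xs = []\<close> True zc
        by (intro exI[of _ "[]"] exI[of _ "[]"] exI[of _ "Suc l"])
           (simp del: nat_pow_Suc add: nat_pow_Suc2; metis nat_pow_Suc nat_pow_Suc2 zc)
    next
      case False
      have m2a: "2 \<le> m" using m2 aC False by blast
      have az: "(a, z) \<in> R" using assms(10) aC by blast
      show ?thesis
      proof (cases "a \<in> set xs")
        case False
        have "\<forall>x\<in>set xs. (a, x) \<in> R \<and> a \<noteq> x" using ge IH(2) False by auto
        then show ?thesis using IH m2a az \<open>a \<noteq> z\<close> ac
          by (intro exI[of _ "a # xs"] exI[of _ "1 # ns"] exI[of _ l]) auto
      next
        case True
        obtain x1 xs' where xs: "xs = x1 # xs'" using True by (cases xs) auto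
        have "x1 = a"
        proof (rule ccontr)
          assume "x1 \<noteq> a"
          then have "a \<in> set xs'" using True xs by simp
          then have "(x1, a) \<in> R" using IH(3) xs by auto
          moreover have "(a, x1) \<in> R" using ge IH(2) xs by auto
          ultimately show False using an \<open>x1 \<noteq> a\<close> by (auto simp: antisym_def)
        qed
        obtain k ns' where ns: "ns = k # ns'" using IH(1) xs by (cases ns) auto
        have xs'C: "set xs' \<subseteq> C" using xsC xs by auto
        define L where "L = map2 (\<lambda>x k. x [^] k) xs' ns'"
        have LC: "set L \<subseteq> carrier G" using Lc[OF xs'C] L_def by simp
        have Mc: "mprod G (L @ [z [^] l]) \<in> carrier G" using LC zc by simp
        have "mprod G (a # ws) = a \<otimes> (a [^] k \<otimes> mprod G (L @ [z [^] l]))"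
          using IH(7) xs ns \<open>x1 = a\<close> by (simp add: L_def)
        also have "\<dots> = (a \<otimes> a [^] k) \<otimes> mprod G (L @ [z [^] l])"
          using ac Mc by (simp only: m_assoc nat_pow_closed)
        also have "a \<otimes> a [^] k = a [^] Suc k" by (rule nat_pow_Suc2[OF ac, symmetric])
        finally have eq0: "mprod G (a # ws) = a [^] Suc k \<otimes> mprod G (L @ [z [^] l])" .
        have kb: "1 \<le> k" "k \<le> m - 1" using IH(5) ns by auto
        show ?thesis
        proof (cases "Suc k \<le> m - 1")
          case True
          then show ?thesis using IH xs ns \<open>x1 = a\<close> eq0
            by (intro exI[of _ "a # xs'"] exI[of _ "Suc k # ns'"] exI[of _ l]) (auto simp: L_def)
        next
          case False
          then have mk: "Suc k = m" using kb m2a by simp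
          have "mprod G (a # ws) = c \<otimes> mprod G (L @ [z [^] l])"
            using eq0 mk powc aC by simp
          also have "\<dots> = mprod G (L @ [c \<otimes> z [^] l])"
            using central_push[OF cC central _ LC] zc by simp
          also have "c \<otimes> z [^] l = z [^] (l + m)" using czm zc by (simp add: nat_pow_mult add.commute)
          finally have e: "mprod G (a # ws) = mprod G (L @ [z [^] (l + m)])" .
          show ?thesis using IH xs ns \<open>x1 = a\<close> e mk
            by (intro exI[of _ "xs'"] exI[of _ "ns'"] exI[of _ "l + m"]) (auto simp: L_def)
        qed
      qed
    qed
  qed
  have cl: "\<forall>a b. a \<in> C \<longrightarrow> b \<in> C \<longrightarrow> inv b \<otimes> a \<otimes> b \<in> C"
    using conjC CG by (metis inv_closed inv_inv subsetD)
  obtain ws where ws: "set ws \<subseteq> C" "length ws = length ys"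
    "sorted_wrt (\<lambda>a b. (a, b) \<in> R) ws" "mprod G ws = mprod G ys"
    using sort_word[OF assms(1) CG assms(3) assms(8) cl assms(11)] by blast
  show ?thesis using key[OF ws(1) ws(3)] ws assms(12) by fastforce
qed

end
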